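(* For every positive integer $n$, \[u(n,n+2)=\varepsilon(n,n+2)=\left\lfloor\frac{2n+4}{3}\right\rfloor.\]
   Context: All matrices are binary. For a nonempty set $S$ of columns of a binary matrix, let $z$ be the sum over the integers of the columns in $S$. $S$ is called $1$-free if no entry of $z$ equals $1$, and even if all entries of $z$ are even. For a binary $m\times n$ matrix $A$ with $m<n$: $\varepsilon(A)$ is the smallest cardinality of a nonempty even set of columns, and $u(A)$ the smallest cardinality of a nonempty $1$-free set of columns. For $m<n$, $\varepsilon(m,n)$ and $u(m,n)$ are the maxima of $\varepsilon(A)$, resp. $u(A)$, over all binary $m\times n$ matrices. *)

theory Defs
  imports Main
begin

text \<open>A binary m x n matrix is represented by A :: nat => nat => bool, entry (i,j) being
  of_bool (A i j) for i < m, j < n (entries outside this range are irrelevant).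
  Columns are indexed by j < n.\<close>

definition colsum :: "(nat \<Rightarrow> nat \<Rightarrow> bool) \<Rightarrow> nat set \<Rightarrow> nat \<Rightarrow> nat" where
  "colsum A S i = (\<Sum>j\<in>S. of_bool (A i j))"

definition even_set :: "nat \<Rightarrow> nat \<Rightarrow> (nat \<Rightarrow> nat \<Rightarrow> bool) \<Rightarrow> nat set \<Rightarrow> bool" where
  "even_set m n A S \<longleftrightarrow> S \<noteq> {} \<and> S \<subseteq> {..<n} \<and> (\<forall>i<m. even (colsum A S i))"

definition one_free :: "nat \<Rightarrow> nat \<Rightarrow> (nat \<Rightarrow> nat \<Rightarrow> bool) \<Rightarrow> nat set \<Rightarrow> bool" where
  "one_free m n A S \<longleftrightarrow> S \<noteq> {} \<and> S \<subseteq> {..<n} \<and> (\<forall>i<m. colsum A S i \<noteq> 1)"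

definition eps_mat :: "nat \<Rightarrow> nat \<Rightarrow> (nat \<Rightarrow> nat \<Rightarrow> bool) \<Rightarrow> nat" where
  "eps_mat m n A = (LEAST k. \<exists>S. even_set m n A S \<and> card S = k)"

definition u_mat :: "nat \<Rightarrow> nat \<Rightarrow> (nat \<Rightarrow> nat \<Rightarrow> bool) \<Rightarrow> nat" where
  "u_mat m n A = (LEAST k. \<exists>S. one_free m n A S \<and> card S = k)"

definition eps_num :: "nat \<Rightarrow> nat \<Rightarrow> nat" where
  "eps_num m n = Max {eps_mat m n A | A. True}"

definition u_num :: "nat \<Rightarrow> nat \<Rightarrow> nat" where
  "u_num m n = Max {u_mat m n A | A. True}"

end

theory Submission
  imports Defs
begin

lemma pigeon3:
  assumes fin: "finite B" and maps: "\<And>x. x \<in> X \<Longrightarrow> f x \<in> B" and big: "card X > 2 * card B"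
  shows "\<exists>a b c. a \<in> X \<and> b \<in> X \<and> c \<in> X \<and> a \<noteq> b \<and> a \<noteq> c \<and> b \<noteq> c \<and> f a = f b \<and> f b = f c"
proof (rule ccontr)
  assume neg: "\<not> ?thesis"
  have finX: "finite X"
    using big card.infinite by fastforce
  have le2: "card {x\<in>X. f x = y} \<le> 2" for y
  proof (rule ccontr)
    assume "\<not> card {x\<in>X. f x = y} \<le> 2"
    then have "2 < card {x\<in>X. f x = y}" by simp
    then obtain T where T: "T \<subseteq> {x\<in>X. f x = y}" "card T = 3"
      using obtain_subset_with_card_n[of 3 "{x\<in>X. f x = y}"] by force
    then obtain a b c where "a \<in> {x\<in>X. f x = y}" "b \<in> {x\<in>X. f x = y}" "c \<in> {x\<in>X. f x = y}"
      "a \<noteq> b" "a \<noteq> c" "b \<noteq> c"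
      unfolding card_3_iff by auto
    then show False using neg by (metis (mono_tags, lifting) mem_Collect_eq)
  qed
  have "X \<subseteq> (\<Union>y\<in>B. {x\<in>X. f x = y})" using maps by auto
  then have "card X \<le> card (\<Union>y\<in>B. {x\<in>X. f x = y})"
    by (intro card_mono) (use fin finX in auto)
  also have "\<dots> \<le> (\<Sum>y\<in>B. card {x\<in>X. f x = y})" by (rule card_UN_le[OF fin])
  also have "\<dots> \<le> (\<Sum>y\<in>B. 2)" by (rule sum_mono) (rule le2)
  also have "\<dots> = 2 * card B" by simp
  finally show False using big by simp
qed

lemma colsum_sym_diff:
  assumes "finite X" "finite Y"
  shows "colsum A ((X - Y) \<union> (Y - X)) i + 2 * colsum A (X \<inter> Y) i = colsum A X i + colsum A Y i"
proof -
  let ?f = "\<lambda>j. of_bool (A i j) :: nat"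
  have X: "sum ?f X = sum ?f (X - Y) + sum ?f (X \<inter> Y)"
  proof -
    have "sum ?f X = sum ?f (X - X \<inter> Y) + sum ?f (X \<inter> Y)"
      by (rule sum.subset_diff) (use assms in auto)
    moreover have "X - X \<inter> Y = X - Y" by blast
    ultimately show ?thesis by simp
  qed
  have Y: "sum ?f Y = sum ?f (Y - X) + sum ?f (X \<inter> Y)"
  proof -
    have "sum ?f Y = sum ?f (Y - X \<inter> Y) + sum ?f (X \<inter> Y)"
      by (rule sum.subset_diff) (use assms in auto)
    moreover have "Y - X \<inter> Y = Y - X" by blast
    ultimately show ?thesis by simp
  qed
  have D: "sum ?f ((X - Y) \<union> (Y - X)) = sum ?f (X - Y) + sum ?f (Y - X)"
    using assms by (intro sum.union_disjoint) auto
  show ?thesis unfolding colsum_def using X Y D by simp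
qed

lemma parity_even:
  assumes "finite X" "finite Y" "odd (colsum A X i) = odd (colsum A Y i)"
  shows "even (colsum A ((X - Y) \<union> (Y - X)) i)"
proof -
  have "even (colsum A X i + colsum A Y i)" using assms(3) by auto
  then show ?thesis using colsum_sym_diff[OF assms(1,2), of A i]
    by (metis dvd_add_left_iff dvd_triv_left)
qed

lemma card_indicator:
  fixes N :: nat
  assumes "E \<subseteq> {..<N}"
  shows "card E = (\<Sum>x<N. of_bool (x \<in> E))"
proof -
  have "(\<Sum>x<N. of_bool (x \<in> E) :: nat) = of_nat (card ({..<N} \<inter> {x. x \<in> E}))"
    by (rule sum_of_bool_eq) auto
  also have "{..<N} \<inter> {x. x \<in> E} = E" using assms by auto
  finally show ?thesis by simp
qed

lemma sd_even_set:
  assumes "X \<subseteq> {..<N}" "Y \<subseteq> {..<N}" "X \<noteq> Y"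
    and "\<And>i. i < n \<Longrightarrow> odd (colsum A X i) = odd (colsum A Y i)"
  shows "even_set n N A ((X - Y) \<union> (Y - X))"
proof -
  have f: "finite X" "finite Y" using assms(1,2) finite_subset by blast+
  show ?thesis unfolding even_set_def
  proof (intro conjI allI impI)
    show "(X - Y) \<union> (Y - X) \<noteq> {}" using assms(3) by blast
    show "(X - Y) \<union> (Y - X) \<subseteq> {..<N}" using assms(1,2) by blast
    fix i assume "i < n"
    then show "even (colsum A ((X - Y) \<union> (Y - X)) i)" using parity_even[OF f assms(4)] by blast
  qed
qed

lemma eps_upper:
  fixes n :: nat and A
  shows "\<exists>E. even_set n (n+2) A E \<and> card E \<le> (2 * n + 4) div 3"
proof -
  define N where "N = n + 2"
  define P where "P S = {i. i < n \<and> odd (colsum A S i)}" for S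
  have "card (Pow {..<N}) = 2 ^ N" by (simp add: card_Pow)
  moreover have "card (Pow {..<n}) = 2 ^ n" by (simp add: card_Pow)
  moreover have "2 * 2 ^ n < (2::nat) ^ N" unfolding N_def by simp
  ultimately have big: "card (Pow {..<N}) > 2 * card (Pow {..<n})" by simp
  obtain S1 S2 S3 where S: "S1 \<in> Pow {..<N}" "S2 \<in> Pow {..<N}" "S3 \<in> Pow {..<N}"
    "S1 \<noteq> S2" "S1 \<noteq> S3" "S2 \<noteq> S3" "P S1 = P S2" "P S2 = P S3"
  proof -
    have "\<And>x. x \<in> Pow {..<N} \<Longrightarrow> P x \<in> Pow {..<n}" unfolding P_def by auto
    from pigeon3[of "Pow {..<n}" "Pow {..<N}" P, OF _ this big] show ?thesis
      using that by blast
  qed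
  have fin: "finite S1" "finite S2" "finite S3" using S by (meson PowD finite_lessThan finite_subset)+
  have par: "odd (colsum A X i) = odd (colsum A Y i)"
    if "P X = P Y" "i < n" for X Y i
    using that unfolding P_def by (metis (mono_tags, lifting) mem_Collect_eq)
  define E1 where "E1 = (S1 - S2) \<union> (S2 - S1)"
  define E2 where "E2 = (S1 - S3) \<union> (S3 - S1)"
  define E3 where "E3 = (S2 - S3) \<union> (S3 - S2)"
  have SS: "S1 \<subseteq> {..<N}" "S2 \<subseteq> {..<N}" "S3 \<subseteq> {..<N}" using S(1-3) by blast+
  have ev1: "even_set n N A E1"
    unfolding E1_def by (rule sd_even_set[OF SS(1,2) S(4)]) (use par S(7) in blast)
  have ev2: "even_set n N A E2"
    unfolding E2_def by (rule sd_even_set[OF SS(1,3) S(5)]) (use par S(7,8) in metis)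
  have ev3: "even_set n N A E3"
    unfolding E3_def by (rule sd_even_set[OF SS(2,3) S(6)]) (use par S(8) in blast)
  have sub: "E1 \<subseteq> {..<N}" "E2 \<subseteq> {..<N}" "E3 \<subseteq> {..<N}"
    using ev1 ev2 ev3 unfolding even_set_def by auto
  have "card E1 + card E2 + card E3
      = (\<Sum>x<N. of_bool (x \<in> E1) + of_bool (x \<in> E2) + of_bool (x \<in> E3))"
    using card_indicator[OF sub(1)] card_indicator[OF sub(2)] card_indicator[OF sub(3)]
    by (simp add: sum.distrib)
  also have "\<dots> \<le> (\<Sum>x<N. 2)"
    by (rule sum_mono) (auto simp: E1_def E2_def E3_def)
  also have "\<dots> = 2 * N" by simp
  finally have tot: "card E1 + card E2 + card E3 \<le> 2 * N" .
  have "3 * card E1 \<le> 2 * N \<or> 3 * card E2 \<le> 2 * N \<or> 3 * card E3 \<le> 2 * N" using tot by linarith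
  then obtain E where E: "even_set n N A E" "3 * card E \<le> 2 * N" using ev1 ev2 ev3 by blast
  then have "card E \<le> (2 * n + 4) div 3" unfolding N_def by presburger
  then show ?thesis using E(1) unfolding N_def by auto
qed

definition A0 :: "nat \<Rightarrow> nat \<Rightarrow> nat \<Rightarrow> bool" where
  "A0 n i j \<longleftrightarrow> (i + 1 < n \<and> (j = i \<or> j = i + 3)) \<or> (i + 1 = n \<and> j < 3)"

lemma colsum_card:
  assumes "finite S"
  shows "colsum A S i = card (S \<inter> {j. A i j})"
  unfolding colsum_def using assms by simp

lemma u_lower:
  assumes n: "n > 0" and of: "one_free n (n+2) (A0 n) S"
  shows "(2 * n + 4) div 3 \<le> card S"
proof -
  have ne: "S \<noteq> {}" and sub: "S \<subseteq> {..<n+2}" and nz: "\<And>i. i < n \<Longrightarrow> colsum (A0 n) S i \<noteq> 1"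
    using of unfolding one_free_def by auto
  have fin: "finite S" using sub finite_subset by blast
  have c1: "\<And>i. i < n \<Longrightarrow> card (S \<inter> {j. A0 n i j}) \<noteq> 1"
    using nz colsum_card[OF fin] by metis
  have pair: "i \<in> S \<longleftrightarrow> i + 3 \<in> S" if "i + 1 < n" for i
  proof -
    have eq: "{j. A0 n i j} = {i, i+3}" using that unfolding A0_def by auto
    have "card (S \<inter> {i, i+3}) \<noteq> 1" using c1[of i] that eq by simp
    then show ?thesis by (cases "i \<in> S"; cases "i + 3 \<in> S") auto
  qed
  have clos: "j < n + 2 \<longrightarrow> (j \<in> S \<longleftrightarrow> j mod 3 \<in> S)" for j
  proof (induction j rule: less_induct)
    case (less j)
    show ?case
    proof (cases "j < 3")
      case True then show ?thesis by simp
    next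
      case False
      then obtain k where k: "j = k + 3" by (metis add.commute le_Suc_ex not_less)
      show ?thesis
      proof
        assume jn: "j < n + 2"
        have "k + 1 < n" using jn k by simp
        then have "k \<in> S \<longleftrightarrow> j \<in> S" using pair k by simp
        moreover have "k \<in> S \<longleftrightarrow> k mod 3 \<in> S" using less.IH[of k] k jn by simp
        moreover have "k mod 3 = j mod 3" using k by simp
        ultimately show "j \<in> S \<longleftrightarrow> j mod 3 \<in> S" by simp
      qed
    qed
  qed
  have last: "card (S \<inter> {0,1,2}) \<noteq> 1"
  proof -
    have "{j. A0 n (n - 1) j} = {0,1,2}" using n unfolding A0_def by auto
    then show ?thesis using c1[of "n - 1"] n by simp
  qed
  obtain j where "j \<in> S" using ne by blast
  then have some: "j mod 3 \<in> S" "j mod 3 < 3" using clos[of j] sub by auto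
  have "\<exists>t<3. \<forall>r<3. r \<noteq> t \<longrightarrow> r \<in> S"
  proof -
    have r3: "\<And>r::nat. r < 3 \<longleftrightarrow> r = 0 \<or> r = 1 \<or> r = 2" by auto
    show ?thesis
      using last some unfolding r3
      by (cases "0 \<in> S"; cases "1 \<in> S"; cases "2 \<in> S") (auto simp: Int_insert_right)
  qed
  then obtain t where t: "t < 3" "\<And>r. r < 3 \<Longrightarrow> r \<noteq> t \<Longrightarrow> r \<in> S" by blast
  have "{..<n+2} - S \<subseteq> (\<lambda>k. 3 * k + t) ` {..<(n + 4) div 3}"
  proof
    fix x assume x: "x \<in> {..<n+2} - S"
    then have "x mod 3 \<notin> S" "x < n + 2" using clos[of x] by auto
    then have "x mod 3 = t" using t by (metis mod_less_divisor zero_less_numeral)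
    then have "x = 3 * (x div 3) + t" by (metis div_mult_mod_eq mult.commute)
    moreover have "x div 3 < (n + 4) div 3" using \<open>x < n + 2\<close> by linarith
    ultimately show "x \<in> (\<lambda>k. 3 * k + t) ` {..<(n + 4) div 3}" by blast
  qed
  then have "card ({..<n+2} - S) \<le> card ((\<lambda>k. 3 * k + t) ` {..<(n + 4) div 3})"
    by (intro card_mono) auto
  also have "\<dots> \<le> (n + 4) div 3" using card_image_le[of "{..<(n + 4) div 3}" "\<lambda>k. 3 * k + t"] by simp
  finally have d: "card ({..<n+2} - S) \<le> (n + 4) div 3" .
  have "card ({..<n+2} - S) = (n + 2) - card S" using sub fin by (simp add: card_Diff_subset)
  then show ?thesis using d by linarith
qed

lemma eps_le:
  "eps_mat n (n+2) A \<le> (2 * n + 4) div 3"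
proof -
  obtain E where E0: "even_set n (n+2) A E" and E: "card E \<le> (2 * n + 4) div 3" using eps_upper by blast
  have "(LEAST k. \<exists>S. even_set n (n + 2) A S \<and> card S = k) \<le> card E"
    using E0 by (intro Least_le) blast
  then show ?thesis unfolding eps_mat_def using E by linarith
qed

lemma even_one_free: "even_set m n A S \<Longrightarrow> one_free m n A S"
  unfolding even_set_def one_free_def by (metis odd_one)

lemma u_le_eps:
  "u_mat n (n+2) A \<le> eps_mat n (n+2) A"
proof -
  have "\<exists>k. \<exists>S. even_set n (n+2) A S \<and> card S = k" using eps_upper by blast
  then have "\<exists>S. even_set n (n+2) A S \<and> card S = eps_mat n (n+2) A"
    unfolding eps_mat_def by (rule LeastI_ex)
  then obtain S where S: "even_set n (n+2) A S" "card S = eps_mat n (n+2) A" by blast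
  have "one_free n (n+2) A S" using S(1) by (rule even_one_free)
  then have "(LEAST k. \<exists>S. one_free n (n+2) A S \<and> card S = k) \<le> card S"
    by (intro Least_le) blast
  then show ?thesis unfolding u_mat_def using S(2) by simp
qed

lemma u_A0:
  assumes "n > 0"
  shows "(2 * n + 4) div 3 \<le> u_mat n (n+2) (A0 n)"
proof -
  obtain E where "even_set n (n+2) (A0 n) E" using eps_upper by blast
  then have "one_free n (n+2) (A0 n) E" by (rule even_one_free)
  then have "\<exists>k. \<exists>S. one_free n (n+2) (A0 n) S \<and> card S = k" by blast
  then have "\<exists>S. one_free n (n+2) (A0 n) S \<and> card S = u_mat n (n+2) (A0 n)"
    unfolding u_mat_def by (rule LeastI_ex)
  then obtain S where S: "one_free n (n+2) (A0 n) S" "card S = u_mat n (n+2) (A0 n)" by blast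
  show ?thesis using u_lower[OF assms S(1)] S(2) by simp
qed

lemma Max_char:
  assumes "\<And>A. f A \<le> d" "f A1 = d"
  shows "Max {f A | A. True} = (d::nat)"
proof (rule Max_eqI)
  have sub: "{f A | A. True} \<subseteq> {..d}" using assms(1) by blast
  show "finite {f A | A. True}"
    by (rule finite_subset[OF sub]) simp
  show "\<And>y. y \<in> {f A | A. True} \<Longrightarrow> y \<le> d" using sub by blast
  show "d \<in> {f A | A. True}" using assms(2) by blast
qed

theorem theorem7p1:
  fixes n :: nat
  assumes "n > 0"
  shows "u_num n (n + 2) = eps_num n (n + 2) \<and> eps_num n (n + 2) = (2 * n + 4) div 3"
proof -
  have u0: "u_mat n (n+2) (A0 n) = (2 * n + 4) div 3"
    using u_A0[OF assms] u_le_eps[of n "A0 n"] eps_le[of n "A0 n"] by linarith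
  have e0: "eps_mat n (n+2) (A0 n) = (2 * n + 4) div 3"
    using u_A0[OF assms] u_le_eps[of n "A0 n"] eps_le[of n "A0 n"] by linarith
  have ue: "u_num n (n+2) = (2 * n + 4) div 3"
    unfolding u_num_def by (rule Max_char[where f="u_mat n (n+2)", OF _ u0]) (meson u_le_eps eps_le order_trans)
  have ee: "eps_num n (n+2) = (2 * n + 4) div 3"
    unfolding eps_num_def by (rule Max_char[where f="eps_mat n (n+2)", OF _ e0]) (rule eps_le)
  show ?thesis using ue ee by simp
qed

end
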